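(* Let $\alpha^\star>0$ and let $\theta:(0,\infty)\to\mathbb{R}$ be a function. For $\Lambda\ge 0$, $m>0$ and $\Delta t>0$ define, for $x>0$, $$A(x)=\cos(\theta(x))-\frac{\Delta t^2(\Lambda/m)}{2}\,\frac{\sin(\theta(x))}{x}.$$ Suppose that $0<\theta(x)<2\arctan(2x/\alpha^\star)$ for all $x>0$. Then for all $\Lambda\ge 0$, $m>0$ and $\Delta t>0$ satisfying $\Delta t^2\Lambda/m<\alpha^\star$, we have $|A(x)|<1$ for all $x>0$.
   Context: $\theta$ is the angle function parametrizing an approximate free ring-polymer update; $\Lambda$ is the curvature of a harmonic external potential $V(q)=(\Lambda/2)q^2$, $m$ a mass and $\Delta t$ a time-step. *)

theory Defs
  imports Complex_Main
begin

end

theory Submission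
  imports Defs
begin

theorem theorem2:
  fixes alpha_star :: real and theta :: "real \<Rightarrow> real"
  assumes alpha_pos: "alpha_star > 0"
    and theta_bounds: "\<And>x. x > 0 \<Longrightarrow> 0 < theta x \<and> theta x < 2 * arctan (2 * x / alpha_star)"
  shows "\<forall>\<Lambda> m dt. \<Lambda> \<ge> 0 \<and> m > 0 \<and> dt > 0 \<and> dt^2 * \<Lambda> / m < alpha_star \<longrightarrow>
           (\<forall>x > 0. \<bar>cos (theta x) - (dt^2 * (\<Lambda> / m)) / 2 * (sin (theta x) / x)\<bar> < (1::real))"
proof (intro allI impI)
  fix L m dt x :: real
  assume h: "L \<ge> 0 \<and> m > 0 \<and> dt > 0 \<and> dt^2 * L / m < alpha_star" and x: "x > 0"
  define a where "a = dt^2 * (L / m)"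
  have a0: "a \<ge> 0" using h by (simp add: a_def)
  have aa: "a < alpha_star" using h by (simp add: a_def)
  define t where "t = theta x / 2"
  define u where "u = 2 * x / alpha_star"
  have t0: "0 < t" and tu: "t < arctan u" using theta_bounds[OF x] by (auto simp: t_def u_def)
  have tpi: "t < pi/2" using tu arctan_ubound[of u] by linarith
  have ct: "cos t > 0" using t0 tpi by (intro cos_gt_zero) auto
  have st: "sin t > 0" using t0 tpi by (intro sin_gt_zero) auto
  have "tan t < tan (arctan u)"
    using t0 tu arctan_lbound[of u] arctan_ubound[of u] by (intro tan_monotone) auto
  hence "tan t < u" by (simp add: tan_arctan)
  hence sb: "sin t < u * cos t" using ct by (simp add: tan_def divide_simps)
  have "a/2 * sin t \<le> a/2 * (u * cos t)" using sb a0 by (intro mult_left_mono) auto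
  also have "a/2 * (u * cos t) = (a / alpha_star) * (x * cos t)" using alpha_pos by (simp add: u_def)
  also have "\<dots> < x * cos t"
  proof -
    have "a / alpha_star < 1" using aa alpha_pos by simp
    moreover have "x * cos t > 0" using x ct by simp
    ultimately have "(a / alpha_star) * (x * cos t) < 1 * (x * cos t)" by (intro mult_strict_right_mono) auto
    thus ?thesis by simp
  qed
  finally have key: "a/2 * sin t < x * cos t" .
  have th: "theta x = 2 * t" by (simp add: t_def)
  have c2: "cos (theta x) = 2 * (cos t)^2 - 1" by (simp add: th cos_double_cos)
  have s2: "sin (theta x) = 2 * sin t * cos t" by (simp add: th sin_double)
  have "cos (theta x) < 1"
  proof -
    have "(sin t)^2 > 0" using st by simp
    hence "(cos t)^2 < 1" using sin_cos_squared_add[of t] by linarith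
    thus ?thesis using c2 by simp
  qed
  moreover have "a / 2 * (sin (theta x) / x) \<ge> 0" using a0 st ct x s2 by simp
  moreover have "a / 2 * (sin (theta x) / x) < cos (theta x) + 1"
  proof -
    have "a / 2 * (sin (theta x) / x) = 2 * cos t * (a/2 * sin t) / x" using s2 by (simp add: field_simps)
    also have "\<dots> < 2 * cos t * (x * cos t) / x"
      using key ct x by (intro divide_strict_right_mono) auto
    also have "\<dots> = cos (theta x) + 1" using c2 x by (simp add: power2_eq_square)
    finally show ?thesis .
  qed
  ultimately show "\<bar>cos (theta x) - (dt^2 * (L / m)) / 2 * (sin (theta x) / x)\<bar> < 1"
    unfolding a_def[symmetric] by linarith
qed

end
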